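(* Let $H$ be a simple graph with $\chi'(H)\geq t$. Then $H$ contains $t$ connected subgraphs, each with at least one edge, that are pairwise edge-disjoint and such that any two of them have at least one vertex in common.
   Context: $\chi'(H)$ denotes the chromatic index of $H$ (minimum number of colours in a proper edge-colouring). *)

theory Defs
  imports Main
begin

definition simple_graph :: "'a set \<Rightarrow> 'a set set \<Rightarrow> bool" where
  "simple_graph V E \<longleftrightarrow> finite V \<and> (\<forall>e\<in>E. e \<subseteq> V \<and> card e = 2)"

definition proper_edge_colouring :: "'a set set \<Rightarrow> nat \<Rightarrow> ('a set \<Rightarrow> nat) \<Rightarrow> bool" where
  "proper_edge_colouring E k c \<longleftrightarrow>
     (\<forall>e\<in>E. c e < k) \<and>
     (\<forall>e\<in>E. \<forall>f\<in>E. e \<noteq> f \<and> e \<inter> f \<noteq> {} \<longrightarrow> c e \<noteq> c f)"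

definition chromatic_index :: "'a set set \<Rightarrow> nat" where
  "chromatic_index E = (LEAST k. \<exists>c. proper_edge_colouring E k c)"

text \<open>A subgraph without isolated vertices, given by its edge set F, with vertex set \<Union>F,
  is connected if any two of its vertices are joined by a walk using edges of F.\<close>
definition connected_edge_set :: "'a set set \<Rightarrow> bool" where
  "connected_edge_set F \<longleftrightarrow>
     (\<forall>u\<in>\<Union>F. \<forall>v\<in>\<Union>F. (\<lambda>x y. {x, y} \<in> F)\<^sup>*\<^sup>* u v)"

end

theory Submission
  imports Defs
begin


definition le1 :: "('a \<Rightarrow> 'a \<Rightarrow> bool) \<Rightarrow> 'a \<Rightarrow> bool" where
  "le1 R x \<longleftrightarrow> (\<forall>y z. R x y \<longrightarrow> R x z \<longrightarrow> y = z)"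
definition le2 :: "('a \<Rightarrow> 'a \<Rightarrow> bool) \<Rightarrow> 'a \<Rightarrow> bool" where
  "le2 R x \<longleftrightarrow> (\<forall>y z w. R x y \<longrightarrow> R x z \<longrightarrow> R x w \<longrightarrow> y = z \<or> y = w \<or> z = w)"

lemma reach_remove:
  assumes "R\<^sup>*\<^sup>* u z" "le1 R u" "R u y" "\<And>x. \<not> R x x"
  shows "z = u \<or> (\<lambda>p q. R p q \<and> p \<noteq> u \<and> q \<noteq> u)\<^sup>*\<^sup>* y z"
  using assms(1)
proof (induction rule: rtranclp_induct)
  case base then show ?case by simp
next
  case (step z w)
  let ?R' = "\<lambda>p q. R p q \<and> p \<noteq> u \<and> q \<noteq> u"
  have yu: "y \<noteq> u" using assms(3,4) by blast
  from step.IH show ?case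
  proof
    assume "z = u"
    then have "w = y" using step.hyps(2) assms(2,3) unfolding le1_def by blast
    then show ?thesis by simp
  next
    assume h: "?R'\<^sup>*\<^sup>* y z"
    have zu: "z \<noteq> u" using h yu by (cases rule: rtranclp.cases) auto
    show ?thesis
    proof (cases "w = u")
      case True then show ?thesis by simp
    next
      case False
      then have "?R' z w" using zu step.hyps(2) by simp
      then have "?R'\<^sup>*\<^sup>* y w" using rtranclp.rtrancl_into_rtrancl[OF h] by blast
      then show ?thesis by simp
    qed
  qed
qed

lemma isolated_reach:
  assumes "R\<^sup>*\<^sup>* a b" "\<And>z. \<not> R a z" shows "b = a"
  using assms by (cases rule: converse_rtranclpE) auto

lemma path3_aux:
  "card S = n \<Longrightarrow> finite S \<Longrightarrow> (\<forall>x y. R x y \<longrightarrow> x \<in> S) \<Longrightarrow> symp R \<Longrightarrow> (\<forall>x. \<not> R x x) \<Longrightarrow>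
   (\<forall>x. le2 R x) \<Longrightarrow> le1 R u \<Longrightarrow> le1 R a \<Longrightarrow> le1 R b \<Longrightarrow> u \<noteq> a \<Longrightarrow> u \<noteq> b \<Longrightarrow> a \<noteq> b \<Longrightarrow>
   R\<^sup>*\<^sup>* u a \<Longrightarrow> R\<^sup>*\<^sup>* u b \<Longrightarrow> False"
proof (induction n arbitrary: S R u a b rule: less_induct)
  case (less n S R u a b)
  show False
  proof (cases "\<exists>y. R u y")
    case False
    then have "a = u" using isolated_reach[OF less.prems(13)] by blast
    then show False using less.prems(10) by simp
  next
    case True
    then obtain y where uy: "R u y" by blast
    define R' where "R' = (\<lambda>p q. R p q \<and> p \<noteq> u \<and> q \<noteq> u)"
    have yu: "y \<noteq> u" using uy less.prems(5) by blast
    have ra: "R'\<^sup>*\<^sup>* y a" using reach_remove[OF less.prems(13) less.prems(7) uy] less.prems(5,10)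
      unfolding R'_def by blast
    have rb: "R'\<^sup>*\<^sup>* y b" using reach_remove[OF less.prems(14) less.prems(7) uy] less.prems(5,11)
      unfolding R'_def by blast
    have yR: "R y u" using uy less.prems(4) by (simp add: symp_def)
    have iso: "\<not> R' a z" if "y = a" for z
    proof
      assume "R' a z"
      then have "R a z" "z \<noteq> u" unfolding R'_def by auto
      moreover have "R a u" using yR that by simp
      ultimately show False using less.prems(8) unfolding le1_def by blast
    qed
    have isob: "\<not> R' b z" if "y = b" for z
    proof
      assume "R' b z"
      then have "R b z" "z \<noteq> u" unfolding R'_def by auto
      moreover have "R b u" using yR that by simp
      ultimately show False using less.prems(9) unfolding le1_def by blast
    qed
    show False
    proof (cases "y = a \<or> y = b")
      case True
      then show False
      proof
        assume "y = a"
        then show False using isolated_reach[of R' a b] iso rb less.prems(12) by blast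
      next
        assume "y = b"
        then show False using isolated_reach[of R' b a] isob ra less.prems(12) by metis
      qed
    next
      case False
      have uS: "u \<in> S" using uy less.prems(3) by blast
      have lt: "card (S - {u}) < n" using uS less.prems(1,2) by (metis card_Diff1_less)
      show False
      proof (rule less.IH[OF lt refl _ _ _ _ _ _ _ _ _ _ _ ra rb])
        show "finite (S - {u})" using less.prems(2) by simp
        show "\<forall>x y. R' x y \<longrightarrow> x \<in> S - {u}" using less.prems(3) unfolding R'_def by blast
        show "symp R'" using less.prems(4) unfolding R'_def symp_def by blast
        show "\<forall>x. \<not> R' x x" using less.prems(5) unfolding R'_def by blast
        show "\<forall>x. le2 R' x" using less.prems(6) unfolding R'_def le2_def by blast
        show "le1 R' y" using less.prems(6) uy yu unfolding R'_def le2_def le1_def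
          by (metis yR)
        show "le1 R' a" using less.prems(8) unfolding R'_def le1_def by blast
        show "le1 R' b" using less.prems(9) unfolding R'_def le1_def by blast
        show "y \<noteq> a" "y \<noteq> b" "a \<noteq> b" using False less.prems(12) by auto
      qed
    qed
  qed
qed




definition missing :: "'a set set \<Rightarrow> ('a set \<Rightarrow> nat) \<Rightarrow> 'a \<Rightarrow> nat \<Rightarrow> bool" where
  "missing G c x g \<longleftrightarrow> (\<forall>f\<in>G. x \<in> f \<longrightarrow> c f \<noteq> g)"

definition kR :: "'a set set \<Rightarrow> ('a set \<Rightarrow> nat) \<Rightarrow> nat \<Rightarrow> nat \<Rightarrow> 'a \<Rightarrow> 'a \<Rightarrow> bool" where
  "kR G c al be x y \<longleftrightarrow> {x, y} \<in> G \<and> (c {x, y} = al \<or> c {x, y} = be)"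

definition sw :: "nat \<Rightarrow> nat \<Rightarrow> nat \<Rightarrow> nat" where
  "sw al be g = (if g = al then be else if g = be then al else g)"

definition kswap :: "'a set set \<Rightarrow> ('a set \<Rightarrow> nat) \<Rightarrow> nat \<Rightarrow> nat \<Rightarrow> 'a \<Rightarrow> 'a set \<Rightarrow> nat" where
  "kswap G c al be x0 f = (if f \<inter> {z. (kR G c al be)\<^sup>*\<^sup>* x0 z} \<noteq> {} \<and> (c f = al \<or> c f = be)
      then sw al be (c f) else c f)"

lemma card2_other: "card f = 2 \<Longrightarrow> x \<in> f \<Longrightarrow> \<exists>y. y \<noteq> x \<and> f = {x, y}"
  by (metis card_2_iff insert_commute insert_iff singletonD)

lemma kR_sym: "kR G c al be x y \<Longrightarrow> kR G c al be y x"
  unfolding kR_def by (simp add: insert_commute)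

lemma symp_kR: "symp (kR G c al be)"
  using kR_sym by (metis sympI)

lemma kR_irrefl: "\<forall>f\<in>G. card f = 2 \<Longrightarrow> \<not> kR G c al be x x"
  unfolding kR_def by fastforce

lemma proper_diff:
  assumes "proper_edge_colouring G k c" "f \<in> G" "g \<in> G" "f \<noteq> g" "x \<in> f" "x \<in> g"
  shows "c f \<noteq> c g"
  using assms unfolding proper_edge_colouring_def by blast

lemma kR_le2:
  assumes "proper_edge_colouring G k c"
  shows "le2 (kR G c al be) x"
  unfolding le2_def
proof (intro allI impI)
  fix y z w assume h: "kR G c al be x y" "kR G c al be x z" "kR G c al be x w"
  show "y = z \<or> y = w \<or> z = w"
  proof (rule ccontr)
    assume "\<not> ?thesis"
    then have ne: "{x,y} \<noteq> {x,z}" "{x,y} \<noteq> {x,w}" "{x,z} \<noteq> {x,w}"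
      by (metis doubleton_eq_iff)+
    have "c {x,y} \<noteq> c {x,z}" "c {x,y} \<noteq> c {x,w}" "c {x,z} \<noteq> c {x,w}"
      using proper_diff[OF assms] h ne unfolding kR_def by (meson insertI1)+
    then show False using h unfolding kR_def by auto
  qed
qed

lemma kR_le1:
  assumes "proper_edge_colouring G k c" "missing G c x al \<or> missing G c x be"
  shows "le1 (kR G c al be) x"
  unfolding le1_def
proof (intro allI impI)
  fix y z assume h: "kR G c al be x y" "kR G c al be x z"
  show "y = z"
  proof (rule ccontr)
    assume "y \<noteq> z"
    then have ne: "{x,y} \<noteq> {x,z}" by (metis doubleton_eq_iff)
    have "c {x,y} \<noteq> c {x,z}"
      using proper_diff[OF assms(1)] h ne unfolding kR_def by (meson insertI1)
    then show False using h assms(2) unfolding kR_def missing_def by auto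
  qed
qed

lemma edge_in_C:
  assumes two: "\<forall>f\<in>G. card f = 2" and f: "f \<in> G" "c f = al \<or> c f = be"
    and ne: "f \<inter> {z. (kR G c al be)\<^sup>*\<^sup>* x0 z} \<noteq> {}"
  shows "f \<subseteq> {z. (kR G c al be)\<^sup>*\<^sup>* x0 z}"
proof -
  obtain a where a: "a \<in> f" "(kR G c al be)\<^sup>*\<^sup>* x0 a" using ne by blast
  obtain b where b: "b \<noteq> a" "f = {a, b}" using card2_other[of f a] two f(1) a(1) by blast
  have "kR G c al be a b" using f b unfolding kR_def by simp
  then have "(kR G c al be)\<^sup>*\<^sup>* x0 b" using a(2) by (meson rtranclp.rtrancl_into_rtrancl)
  then show ?thesis using a b by blast
qed

lemma sw_inj: "sw al be x = sw al be y \<Longrightarrow> x = y"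
  unfolding sw_def by (auto split: if_splits)

lemma sw_mem: "x = al \<or> x = be \<Longrightarrow> sw al be x = al \<or> sw al be x = be"
  unfolding sw_def by auto

lemma sw_lt: "x < k \<Longrightarrow> al < k \<Longrightarrow> be < k \<Longrightarrow> sw al be x < k"
  unfolding sw_def by auto

lemma kswap_proper:
  assumes two: "\<forall>f\<in>G. card f = 2" and pc: "proper_edge_colouring G k c" and "al < k" "be < k"
  shows "proper_edge_colouring G k (kswap G c al be x0)"
proof -
  let ?C = "{z. (kR G c al be)\<^sup>*\<^sup>* x0 z}"
  have rng: "\<forall>e\<in>G. kswap G c al be x0 e < k"
    using pc assms(3,4) sw_lt unfolding proper_edge_colouring_def kswap_def by simp
  have "kswap G c al be x0 e \<noteq> kswap G c al be x0 f"
    if ef: "e \<in> G" "f \<in> G" "e \<noteq> f" "e \<inter> f \<noteq> {}" for e f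
  proof -
    have cd: "c e \<noteq> c f" using pc ef unfolding proper_edge_colouring_def by blast
    have key: False if "e \<inter> ?C \<noteq> {}" "c e = al \<or> c e = be" "\<not> (f \<inter> ?C \<noteq> {} \<and> (c f = al \<or> c f = be))"
       "c f = al \<or> c f = be" "e \<inter> f \<noteq> {}" "e \<in> G" for e f
    proof -
      have "e \<subseteq> ?C" using edge_in_C[of G e c al be x0] two that by blast
      then show False using that by blast
    qed
    show ?thesis
    proof (cases "e \<inter> ?C \<noteq> {} \<and> (c e = al \<or> c e = be)")
      case Pe: True
      have ke: "kswap G c al be x0 e = sw al be (c e)" unfolding kswap_def using Pe by (rule if_P)
      show ?thesis
      proof (cases "f \<inter> ?C \<noteq> {} \<and> (c f = al \<or> c f = be)")
        case True
        then have "kswap G c al be x0 f = sw al be (c f)" unfolding kswap_def by (rule if_P)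
        then show ?thesis using ke cd sw_inj by metis
      next
        case False
        then have kf: "kswap G c al be x0 f = c f" unfolding kswap_def by (rule if_not_P)
        have "c f \<noteq> al \<and> c f \<noteq> be" using key[of e f] Pe ef False by blast
        then show ?thesis using ke kf sw_mem Pe by metis
      qed
    next
      case nPe: False
      then have ke: "kswap G c al be x0 e = c e" unfolding kswap_def by (rule if_not_P)
      show ?thesis
      proof (cases "f \<inter> ?C \<noteq> {} \<and> (c f = al \<or> c f = be)")
        case True
        then have kf: "kswap G c al be x0 f = sw al be (c f)" unfolding kswap_def by (rule if_P)
        have "c e \<noteq> al \<and> c e \<noteq> be" using key[of f e] nPe ef True by (metis inf_commute)
        then show ?thesis using ke kf sw_mem True by metis
      next
        case False
        then have "kswap G c al be x0 f = c f" unfolding kswap_def by (rule if_not_P)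
        then show ?thesis using ke cd by simp
      qed
    qed
  qed
  then show ?thesis using rng unfolding proper_edge_colouring_def by blast
qed

lemma kswap_out: "f \<inter> {z. (kR G c al be)\<^sup>*\<^sup>* x0 z} = {} \<Longrightarrow> kswap G c al be x0 f = c f"
  unfolding kswap_def by simp

lemma kswap_other: "d \<noteq> al \<Longrightarrow> d \<noteq> be \<Longrightarrow> (kswap G c al be x0 f = d) = (c f = d)"
  unfolding kswap_def sw_def by auto

lemma kswap_in:
  assumes "(kR G c al be)\<^sup>*\<^sup>* x0 x" "missing G c x be"
  shows "missing G (kswap G c al be x0) x al"
  using assms unfolding missing_def kswap_def sw_def by auto

lemma missing_out:
  assumes two: "\<forall>f\<in>G. card f = 2" and "\<not> (kR G c al be)\<^sup>*\<^sup>* x0 x" "f \<in> G" "x \<in> f"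
  shows "kswap G c al be x0 f = c f"
proof (cases "c f = al \<or> c f = be")
  case True
  show ?thesis
  proof (rule ccontr)
    assume "kswap G c al be x0 f \<noteq> c f"
    then have "f \<inter> {z. (kR G c al be)\<^sup>*\<^sup>* x0 z} \<noteq> {}" unfolding kswap_def by auto
    then have "f \<subseteq> {z. (kR G c al be)\<^sup>*\<^sup>* x0 z}" using edge_in_C[of G f c al be x0] two assms(3) True by blast
    then show False using assms by blast
  qed
next
  case False then show ?thesis unfolding kswap_def by auto
qed




definition fan :: "'a set set \<Rightarrow> 'a \<Rightarrow> ('a set \<Rightarrow> nat) \<Rightarrow> (nat \<Rightarrow> 'a) \<Rightarrow> nat \<Rightarrow> bool" where
  "fan F u c v m \<longleftrightarrow> inj_on v {0..m} \<and> (\<forall>i\<le>m. {u, v i} \<in> F \<and> v i \<noteq> u) \<and>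
     (\<forall>i. 1 \<le> i \<and> i \<le> m \<longrightarrow> missing (F - {{u, v 0}}) c (v (i - 1)) (c {u, v i}))"

lemma fan_eq:
  assumes "fan F u c v m" "i \<le> m" "l \<le> m" "{u, v i} = {u, v l}"
  shows "i = l"
proof -
  have "v i \<noteq> u" "v l \<noteq> u" using assms(1-3) unfolding fan_def by auto
  then have "v i = v l" using assms(4) by (metis doubleton_eq_iff)
  then show ?thesis using assms(1-3) unfolding fan_def inj_on_def by auto
qed

lemma shift:
  assumes two: "\<forall>f\<in>F. card f = 2"
    and pc: "proper_edge_colouring (F - {{u, v 0}}) k c"
    and fn: "fan F u c v j"
    and gk: "g < k"
    and mu: "missing (F - {{u, v 0}}) c u g"
    and mv: "missing (F - {{u, v 0}}) c (v j) g"
  shows "\<exists>c'. proper_edge_colouring F k c'"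
proof -
  let ?G = "F - {{u, v 0}}"
  define c' where "c' f = (if \<exists>i<j. f = {u, v i} then c {u, v (Suc (THE i. i < j \<and> f = {u, v i}))}
     else if f = {u, v j} then g else c f)" for f
  have c1: "c' {u, v i} = c {u, v (Suc i)}" if "i < j" for i
  proof -
    have "(THE l. l < j \<and> {u, v i} = {u, v l}) = i"
      proof (rule the_equality)
      show "i < j \<and> {u, v i} = {u, v i}" using that by simp
      fix l assume "l < j \<and> {u, v i} = {u, v l}"
      then show "l = i" using fan_eq[OF fn, of i l] that by simp
    qed
    then show ?thesis using that unfolding c'_def by auto
  qed
  have c2: "c' {u, v j} = g"
  proof -
    have "\<not> (\<exists>i<j. {u, v j} = {u, v i})" using fan_eq[OF fn, of j] by (metis le_refl less_imp_le_nat less_irrefl)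
    then show ?thesis unfolding c'_def by auto
  qed
  have c3: "c' f = c f" if "\<forall>i\<le>j. f \<noteq> {u, v i}" for f
  proof -
    have "\<not> (\<exists>i<j. f = {u, v i})" using that less_imp_le_nat by blast
    moreover have "f \<noteq> {u, v j}" using that by blast
    ultimately show ?thesis unfolding c'_def by (simp only: if_False simp_thms)
  qed
  have inG: "{u, v i} \<in> ?G" if "1 \<le> i" "i \<le> j" for i
  proof -
    have "{u, v i} \<noteq> {u, v 0}" using fan_eq[OF fn, of i 0] that by auto
    then show ?thesis using fn that unfolding fan_def by auto
  qed
  have vu: "v i \<noteq> u" "{u, v i} \<in> F" if "i \<le> j" for i using fn that unfolding fan_def by auto
  have mfan: "missing ?G c (v i) (c {u, v (Suc i)})" if "i < j" for i
    using fn that unfolding fan_def by (metis Suc_leI diff_Suc_1 le_add1 plus_1_eq_Suc)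
  have pG: "c e \<noteq> c f" if "e \<in> ?G" "f \<in> ?G" "e \<noteq> f" "x \<in> e" "x \<in> f" for e f x
    using proper_diff[OF pc that] .
  have rngG: "c e < k" if "e \<in> ?G" for e using pc that unfolding proper_edge_colouring_def by auto
  have fanvs: "c' {u, v i} \<noteq> c' f" if A: "i \<le> j" "f \<in> F" "f \<noteq> {u, v i}" "x \<in> f" "x \<in> {u, v i}" for i f x
  proof (cases "\<exists>l\<le>j. f = {u, v l}")
    case True
    then obtain l where l: "l \<le> j" "f = {u, v l}" by blast
    have il: "i \<noteq> l" using A l by auto
    show ?thesis
    proof (cases "i < j \<and> l < j")
      case True
      have "{u, v (Suc i)} \<noteq> {u, v (Suc l)}" using fan_eq[OF fn, of "Suc i" "Suc l"] il True by auto
      then have "c {u, v (Suc i)} \<noteq> c {u, v (Suc l)}" using pG[of "{u, v (Suc i)}" "{u, v (Suc l)}" u] inG True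
        by (metis Suc_leI insertI1 le_add1 plus_1_eq_Suc)
      then show ?thesis using c1 True l by simp
    next
      case False
      then have "(i = j \<and> l < j) \<or> (l = j \<and> i < j)" using il A(1) l(1) by auto
      then show ?thesis
      proof
        assume h: "i = j \<and> l < j"
        have "c {u, v (Suc l)} \<noteq> g" using mu inG[of "Suc l"] h unfolding missing_def by auto
        then show ?thesis using h c1 c2 l by simp
      next
        assume h: "l = j \<and> i < j"
        have "c {u, v (Suc i)} \<noteq> g" using mu inG[of "Suc i"] h unfolding missing_def by auto
        then show ?thesis using h c1 c2 l by simp
      qed
    qed
  next
    case False
    then have cf: "c' f = c f" using c3 by blast
    have fG: "f \<in> ?G" using False A(2) by auto
    show ?thesis
    proof (cases "x = u")
      case True
      show ?thesis
      proof (cases "i < j")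
        case ij: True
        have "f \<noteq> {u, v (Suc i)}" using False ij by auto
        then have "c {u, v (Suc i)} \<noteq> c f" using pG[of "{u, v (Suc i)}" f u] inG[of "Suc i"] fG ij True A(4)
          by auto
        then show ?thesis using c1 ij cf by simp
      next
        case False
        then have "i = j" using A(1) by simp
        then show ?thesis using c2 cf mu fG True A(4) unfolding missing_def by auto
      qed
    next
      case xu: False
      then have x: "x = v i" using A(5) by auto
      show ?thesis
      proof (cases "i < j")
        case ij: True
        then show ?thesis using c1 cf mfan[OF ij] fG x A(4) unfolding missing_def by auto
      next
        case False
        then have "i = j" using A(1) by simp
        then show ?thesis using c2 cf mv fG x A(4) unfolding missing_def by auto
      qed
    qed
  qed
  have "c' e \<noteq> c' f" if B: "e \<in> F" "f \<in> F" "e \<noteq> f" "e \<inter> f \<noteq> {}" for e f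
  proof -
    obtain x where x: "x \<in> e" "x \<in> f" using B(4) by blast
    show ?thesis
    proof (cases "\<exists>i\<le>j. e = {u, v i}")
      case True
      then obtain i where "i \<le> j" "e = {u, v i}" by blast
      then show ?thesis using fanvs[of i f x] B x by auto
    next
      case nE: False
      show ?thesis
      proof (cases "\<exists>i\<le>j. f = {u, v i}")
        case True
        then obtain i where "i \<le> j" "f = {u, v i}" by blast
        then show ?thesis using fanvs[of i e x] B x by auto
      next
        case False
        have "e \<in> ?G" "f \<in> ?G" using nE False B(1,2) by auto
        then show ?thesis using c3 nE False pG B(3) x by metis
      qed
    qed
  qed
  moreover have "c' e < k" if "e \<in> F" for e
  proof (cases "\<exists>i\<le>j. e = {u, v i}")
    case True
    then obtain i where i: "i \<le> j" "e = {u, v i}" by blast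
    show ?thesis
    proof (cases "i < j")
      case True then show ?thesis using c1 i rngG inG[of "Suc i"] by simp
    next
      case False then show ?thesis using c2 i gk by simp
    qed
  next
    case False
    then show ?thesis using c3 rngG that by auto
  qed
  ultimately show ?thesis unfolding proper_edge_colouring_def by blast
qed




lemma rtr_sym: "symp R \<Longrightarrow> R\<^sup>*\<^sup>* x y \<Longrightarrow> R\<^sup>*\<^sup>* y x"
  by (rule sympD[OF symp_rtranclp])

lemma exists_missing:
  assumes fin: "finite G" and d: "card {f\<in>G. x \<in> f} < k"
  shows "\<exists>g<k. missing G c x g"
proof (rule ccontr)
  assume nt: "\<not> ?thesis"
  have "{0..<k} \<subseteq> c ` {f\<in>G. x \<in> f}"
  proof
    fix g assume "g \<in> {0..<k}"
    then have "\<not> missing G c x g" using nt by auto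
    then obtain f where "f \<in> G" "x \<in> f" "c f = g" unfolding missing_def by blast
    then show "g \<in> c ` {f\<in>G. x \<in> f}" by blast
  qed
  then have "card {0..<k} \<le> card (c ` {f\<in>G. x \<in> f})" by (rule card_mono[rotated]) (use fin in simp)
  then have "k \<le> card (c ` {f\<in>G. x \<in> f})" by simp
  also have "\<dots> \<le> card {f\<in>G. x \<in> f}" using fin by (intro card_image_le) simp
  finally show False using d by simp
qed

lemma fan_bound:
  assumes two: "\<forall>f\<in>F. card f = 2" and fin: "finite F" and fn: "fan F u c v m"
  shows "m < card (\<Union>F)"
proof -
  have fU: "finite (\<Union>F)" using fin two by (intro finite_Union) (auto intro: card_ge_0_finite)
  have "v ` {0..m} \<subseteq> \<Union>F"
  proof
    fix y assume "y \<in> v ` {0..m}"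
    then obtain i where i: "i \<le> m" "y = v i" by auto
    then have "{u, v i} \<in> F" using fn unfolding fan_def by simp
    then show "y \<in> \<Union>F" using i by blast
  qed
  then have "card (v ` {0..m}) \<le> card (\<Union>F)" by (rule card_mono[OF fU])
  moreover have "card (v ` {0..m}) = Suc m" using fn unfolding fan_def by (simp add: card_image)
  ultimately show ?thesis by simp
qed

lemma vizing:
  assumes two: "\<forall>f\<in>F. card f = 2" and fin: "finite F" and e: "{u, v0} \<in> F"
    and deg: "\<forall>x. card {f\<in>F. x \<in> f} < k"
    and pc: "proper_edge_colouring (F - {{u, v0}}) k c"
  shows "\<exists>c'. proper_edge_colouring F k c'"
proof -
  define G where "G = F - {{u, v0}}"
  have finG: "finite G" using fin unfolding G_def by simp
  have twoG: "\<forall>f\<in>G. card f = 2" using two unfolding G_def by simp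
  have miss: "\<exists>g<k. missing G c x g" for x
  proof -
    have "card {f\<in>G. x \<in> f} \<le> card {f\<in>F. x \<in> f}" using fin unfolding G_def by (intro card_mono) auto
    then have "card {f\<in>G. x \<in> f} < k" using deg[rule_format, of x] by linarith
    then show ?thesis by (rule exists_missing[OF finG])
  qed
  have uv0: "u \<noteq> v0"
  proof
    assume "u = v0"
    then have "card {u, v0} = 1" by simp
    then show False using two e by simp
  qed
  define L where "L = {m. \<exists>v. v 0 = v0 \<and> fan F u c v m}"
  have f0: "fan F u c (\<lambda>_. v0) 0" unfolding fan_def using e uv0 by simp
  have "0 \<in> L" unfolding L_def mem_Collect_eq by (rule exI[of _ "\<lambda>_. v0"]) (simp add: f0)
  have "L \<subseteq> {..<card (\<Union>F)}" unfolding L_def using fan_bound[OF two fin] by auto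
  then have finL: "finite L" by (rule finite_subset) simp
  define m where "m = Max L"
  have "L \<noteq> {}" using \<open>0 \<in> L\<close> by blast
  then have "m \<in> L" using finL unfolding m_def by (rule Max_in[rotated])
  then obtain v where v0: "v 0 = v0" and fn: "fan F u c v m" unfolding L_def by blast
  have maxL: "m' \<le> m" if "m' \<in> L" for m' unfolding m_def by (rule Max_ge[OF finL that])
  have pcG: "proper_edge_colouring (F - {{u, v 0}}) k c" using pc v0 by simp
  have Gdef: "F - {{u, v 0}} = G" using v0 G_def by simp
  obtain be where be: "be < k" "missing G c (v m) be" using miss by blast
  obtain al where al: "al < k" "missing G c u al" using miss by blast
  show ?thesis
  proof (cases "missing G c u be")
    case True
    then show ?thesis using shift[OF two pcG fn be(1)] be(2) Gdef by simp
  next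
    case False
    then obtain f where f: "f \<in> G" "u \<in> f" "c f = be" unfolding missing_def by blast
    have cf2: "card f = 2" using twoG f(1) by blast
    obtain w where w: "w \<noteq> u" "f = {u, w}" using card2_other[OF cf2 f(2)] by blast
    have fnv: "\<forall>i\<le>m. {u, v i} \<in> F \<and> v i \<noteq> u" "inj_on v {0..m}"
      "\<forall>i. 1 \<le> i \<and> i \<le> m \<longrightarrow> missing G c (v (i - 1)) (c {u, v i})"
      using fn Gdef unfolding fan_def by auto
    have "w \<in> v ` {0..m}"
    proof (rule ccontr)
      assume nw: "w \<notin> v ` {0..m}"
      define v' where "v' = v(Suc m := w)"
      have "fan F u c v' (Suc m)"
        unfolding fan_def
      proof (intro conjI allI impI)
        have e1: "{0..Suc m} = insert (Suc m) {0..m}" by auto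
        have e2: "v' ` ({0..m} - {Suc m}) = v ` {0..m}" unfolding v'_def by auto
        have "inj_on v' {0..m}" using fnv(2) unfolding v'_def by (rule inj_on_fun_updI) (rule nw)
        moreover have "v' (Suc m) \<notin> v' ` ({0..m} - {Suc m})" using e2 nw unfolding v'_def by simp
        ultimately show "inj_on v' {0..Suc m}" unfolding e1 by simp
      next
        fix i assume i: "i \<le> Suc m"
        show "{u, v' i} \<in> F" using i fnv(1) f w unfolding v'_def G_def by (cases "i = Suc m") auto
        show "v' i \<noteq> u" using i fnv(1) f w unfolding v'_def by (cases "i = Suc m") auto
      next
        fix i assume i: "1 \<le> i \<and> i \<le> Suc m"
        have G': "F - {{u, v' 0}} = G" unfolding v'_def using Gdef by simp
        show "missing (F - {{u, v' 0}}) c (v' (i - 1)) (c {u, v' i})"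
        proof (cases "i = Suc m")
          case True then show ?thesis using G' be f w unfolding v'_def by simp
        next
          case False
          then have im: "i \<le> m" using i by simp
          have "v' (i - 1) = v (i - 1)" "v' i = v i" unfolding v'_def using im by auto
          then show ?thesis using G' fnv(3) i im by simp
        qed
      qed
      moreover have "v' 0 = v0" unfolding v'_def using v0 by simp
      ultimately have "Suc m \<in> L" unfolding L_def by blast
      then show False using maxL by fastforce
    qed
    then obtain j where j: "j \<le> m" "v j = w" by auto
    have j0: "j \<noteq> 0" using j f w v0 unfolding G_def by auto
    have cj: "c {u, v j} = be" using f w j by simp
    have mj: "missing G c (v (j - 1)) be" using fnv(3)[rule_format, of j] j j0 cj by simp
    have ab: "al \<noteq> be" using al f unfolding missing_def by auto
    define R where "R = kR G c al be"
    have pcg: "proper_edge_colouring G k c" using pc G_def by simp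
    have vdist: "v (j - 1) \<noteq> v m" using fnv(2) j j0 unfolding inj_on_def by fastforce
    have vu: "v (j - 1) \<noteq> u" "v m \<noteq> u" using fnv(1) j by auto
    have "\<not> (R\<^sup>*\<^sup>* u (v (j - 1)) \<and> R\<^sup>*\<^sup>* u (v m))"
    proof
      assume h: "R\<^sup>*\<^sup>* u (v (j - 1)) \<and> R\<^sup>*\<^sup>* u (v m)"
      show False
      proof (rule path3_aux[OF refl _ _ _ _ _ _ _ _ _ _ _ conjunct1[OF h] conjunct2[OF h]])
        show "finite (\<Union>G)" using finG twoG by (intro finite_Union) (auto intro: card_ge_0_finite)
        show "\<forall>x y. R x y \<longrightarrow> x \<in> \<Union>G" unfolding R_def kR_def by blast
        show "symp R" unfolding R_def by (rule symp_kR)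
        show "\<forall>x. \<not> R x x" unfolding R_def using kR_irrefl[OF twoG] by blast
        show "\<forall>x. le2 R x" unfolding R_def using kR_le2[OF pcg] by blast
        show "le1 R u" unfolding R_def using kR_le1[OF pcg] al by blast
        show "le1 R (v (j - 1))" unfolding R_def using kR_le1[OF pcg] mj by blast
        show "le1 R (v m)" unfolding R_def using kR_le1[OF pcg] be by blast
        show "u \<noteq> v (j - 1)" "u \<noteq> v m" "v (j - 1) \<noteq> v m" using vu vdist by auto
      qed
    qed
    have uedge: "kswap G c al be x0 f = c f" if "\<not> R\<^sup>*\<^sup>* u x0" "f \<in> G" "u \<in> f" for x0 f
    proof -
      have "\<not> R\<^sup>*\<^sup>* x0 u" using that(1) rtr_sym[OF symp_kR, of G c al be x0 u] unfolding R_def by blast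
      then show ?thesis using missing_out[OF twoG _ that(2,3)] unfolding R_def by blast
    qed
    have fanedgeG: "{u, v i} \<in> G" if "1 \<le> i" "i \<le> m" for i
    proof -
      have "{u, v i} \<noteq> {u, v 0}" using fan_eq[OF fn, of i 0] that by auto
      then show ?thesis using fnv(1) that v0 G_def by auto
    qed
    have colne: "c {u, v i} \<noteq> al \<and> (i \<noteq> j \<longrightarrow> c {u, v i} \<noteq> be)" if "1 \<le> i" "i \<le> m" for i
    proof -
      have "c {u, v i} \<noteq> al" using al fanedgeG[OF that] unfolding missing_def by auto
      moreover have "c {u, v i} \<noteq> be" if "i \<noteq> j"
      proof -
        have "{u, v i} \<noteq> {u, v j}" using fan_eq[OF fn, of i j] that \<open>i \<le> m\<close> j by auto
        then show ?thesis using proper_diff[OF pcg fanedgeG[OF \<open>1 \<le> i\<close> \<open>i \<le> m\<close>] fanedgeG[of j], of u] j j0 cj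
          by auto
      qed
      ultimately show ?thesis by blast
    qed
    show ?thesis
    proof (cases "R\<^sup>*\<^sup>* u (v (j - 1))")
      case False
      define c' where "c' = kswap G c al be (v (j - 1))"
      have pc': "proper_edge_colouring (F - {{u, v 0}}) k c'"
        unfolding c'_def Gdef using kswap_proper[OF twoG pcg al(1) be(1)] .
      have fn': "fan F u c' v (j - 1)" unfolding fan_def
      proof (intro conjI allI impI)
        show "inj_on v {0..j - 1}" by (rule inj_on_subset[OF fnv(2)]) (use j in auto)
      next
        fix i assume "i \<le> j - 1"
        then show "{u, v i} \<in> F" "v i \<noteq> u" using fnv(1) j by auto
      next
        fix i assume i: "1 \<le> i \<and> i \<le> j - 1"
        have i1: "1 \<le> i" and im: "i \<le> m" and ij: "i \<noteq> j" using i j j0 by auto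
        have c'e: "c' {u, v i} = c {u, v i}" unfolding c'_def using uedge[OF False fanedgeG[OF i1 im]] by simp
        have cn: "c {u, v i} \<noteq> al" "c {u, v i} \<noteq> be" using colne[OF i1 im] ij by auto
        have "missing G c (v (i - 1)) (c {u, v i})" using fnv(3)[rule_format, of i] i1 im by simp
        then have "missing G c' (v (i - 1)) (c {u, v i})"
          unfolding missing_def c'_def by (simp add: kswap_other[OF cn])
        then show "missing (F - {{u, v 0}}) c' (v (i - 1)) (c' {u, v i})" using c'e Gdef by simp
      qed
      have mu: "missing G c' u al"
        using al(2) uedge[OF False] unfolding missing_def c'_def by simp
      have mv: "missing G c' (v (j - 1)) al" unfolding c'_def
        by (rule kswap_in[OF rtranclp.rtrancl_refl mj])
      show ?thesis using shift[OF two pc' fn' al(1)] mu mv Gdef by simp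
    next
      case True
      then have nm: "\<not> R\<^sup>*\<^sup>* u (v m)" using \<open>\<not> (R\<^sup>*\<^sup>* u (v (j - 1)) \<and> R\<^sup>*\<^sup>* u (v m))\<close> by blast
      have nj: "\<not> R\<^sup>*\<^sup>* (v m) (v (j - 1))"
      proof
        assume "R\<^sup>*\<^sup>* (v m) (v (j - 1))"
        then have "R\<^sup>*\<^sup>* (v (j - 1)) (v m)" using rtr_sym[OF symp_kR, of G c al be "v m" "v (j - 1)"] unfolding R_def by blast
        then have "R\<^sup>*\<^sup>* u (v m)" by (rule rtranclp_trans[OF True])
        with nm show False by (rule notE)
      qed
      define c' where "c' = kswap G c al be (v m)"
      have pc': "proper_edge_colouring (F - {{u, v 0}}) k c'"
        unfolding c'_def Gdef using kswap_proper[OF twoG pcg al(1) be(1)] .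
      have fn': "fan F u c' v m" unfolding fan_def
      proof (intro conjI allI impI)
        show "inj_on v {0..m}" using fnv(2) .
      next
        fix i assume "i \<le> m"
        then show "{u, v i} \<in> F" "v i \<noteq> u" using fnv(1) by auto
      next
        fix i assume i: "1 \<le> i \<and> i \<le> m"
        have i1: "1 \<le> i" and im: "i \<le> m" using i by auto
        have c'e: "c' {u, v i} = c {u, v i}" unfolding c'_def using uedge[OF nm fanedgeG[OF i1 im]] by simp
        have "missing G c' (v (i - 1)) (c {u, v i})"
        proof (cases "i = j")
          case True
          have "c' f = c f" if "f \<in> G" "v (j - 1) \<in> f" for f
            unfolding c'_def using missing_out[OF twoG _ that, of c al be "v m"] nj unfolding R_def by blast
          then show ?thesis using mj True cj unfolding missing_def by auto
        next
          case False
          have cn: "c {u, v i} \<noteq> al" "c {u, v i} \<noteq> be" using colne[OF i1 im] False by auto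
          have "missing G c (v (i - 1)) (c {u, v i})" using fnv(3)[rule_format, of i] i1 im by simp
          then show ?thesis unfolding missing_def c'_def by (simp add: kswap_other[OF cn])
        qed
        then show "missing (F - {{u, v 0}}) c' (v (i - 1)) (c' {u, v i})" using c'e Gdef by simp
      qed
      have mu: "missing G c' u al"
        using al(2) uedge[OF nm] unfolding missing_def c'_def by simp
      have mv: "missing G c' (v m) al" unfolding c'_def
        by (rule kswap_in[OF rtranclp.rtrancl_refl be(2)])
      show ?thesis using shift[OF two pc' fn' al(1)] mu mv Gdef by simp
    qed
  qed
qed




definition colourable :: "'a set set \<Rightarrow> nat \<Rightarrow> bool" where
  "colourable F k \<longleftrightarrow> (\<exists>c. proper_edge_colouring F k c)"

definition bramble :: "'a set set \<Rightarrow> nat \<Rightarrow> (nat \<Rightarrow> 'a set set) \<Rightarrow> bool" where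
  "bramble F n S \<longleftrightarrow> (\<forall>i<n. S i \<subseteq> F \<and> S i \<noteq> {} \<and> connected_edge_set (S i)) \<and>
           (\<forall>i<n. \<forall>j<n. i \<noteq> j \<longrightarrow> S i \<inter> S j = {} \<and> \<Union>(S i) \<inter> \<Union>(S j) \<noteq> {})"

lemma colourable_mono: "F' \<subseteq> F \<Longrightarrow> colourable F k \<Longrightarrow> colourable F' k"
  unfolding colourable_def proper_edge_colouring_def by (meson subsetD)

lemma bramble_mono: "F' \<subseteq> F \<Longrightarrow> bramble F' n S \<Longrightarrow> bramble F n S"
  unfolding bramble_def by (meson order_trans)

lemma card2_eq: "card f = 2 \<Longrightarrow> p \<in> f \<Longrightarrow> q \<in> f \<Longrightarrow> p \<noteq> q \<Longrightarrow> f = {p, q}"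
proof -
  assume a: "card f = 2" "p \<in> f" "q \<in> f" "p \<noteq> q"
  obtain y where y: "y \<noteq> p" "f = {p, y}" using card2_other[OF a(1,2)] by blast
  then have "q = y" using a(3,4) by blast
  then show ?thesis using y by simp
qed

lemma conn_single:
  assumes "card f = 2" shows "connected_edge_set {f}"
  unfolding connected_edge_set_def
proof (intro ballI)
  fix p q assume "p \<in> \<Union>{f}" "q \<in> \<Union>{f}"
  then have pq: "p \<in> f" "q \<in> f" by auto
  show "(\<lambda>x y. {x, y} \<in> {f})\<^sup>*\<^sup>* p q"
  proof (cases "p = q")
    case True then show ?thesis by simp
  next
    case False
    then have "f = {p, q}" using card2_eq[OF assms pq] by simp
    then show ?thesis by (intro r_into_rtranclp) simp
  qed
qed

lemma star:
  assumes fin: "finite F" and two: "\<forall>f\<in>F. card f = 2" and d: "n \<le> card {f\<in>F. x \<in> f}"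
  shows "\<exists>S. bramble F n S"
proof -
  obtain D where D: "D \<subseteq> {f\<in>F. x \<in> f}" "card D = n" "finite D"
    using obtain_subset_with_card_n[OF d] by blast
  obtain h where h: "bij_betw h {0..<n} D" using ex_bij_betw_nat_finite[OF D(3)] D(2) by auto
  have hD: "h i \<in> D" if "i < n" for i using h that unfolding bij_betw_def by auto
  have hinj: "h i \<noteq> h j" if "i < n" "j < n" "i \<noteq> j" for i j
    using h that unfolding bij_betw_def inj_on_def by auto
  have "bramble F n (\<lambda>i. {h i})"
    unfolding bramble_def
  proof (intro conjI allI impI)
    fix i assume i: "i < n"
    show "{h i} \<subseteq> F" using hD[OF i] D(1) by auto
    show "{h i} \<noteq> {}" by simp
    show "connected_edge_set {h i}" using conn_single two hD[OF i] D(1) by blast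
  next
    fix i j assume "i < n" "j < n" "i \<noteq> j"
    then show "{h i} \<inter> {h j} = {}" using hinj by auto
    have "x \<in> h i" "x \<in> h j" using hD \<open>i < n\<close> \<open>j < n\<close> D(1) by auto
    then show "\<Union>{h i} \<inter> \<Union>{h j} \<noteq> {}" by auto
  qed
  then show ?thesis by blast
qed

lemma perm_exists:
  assumes "A1 \<subseteq> {0..<k}" "A2 \<subseteq> {0..<k}" "card A1 + card A2 \<le> (k::nat)"
  shows "\<exists>p. inj_on p {0..<k} \<and> p ` {0..<k} \<subseteq> {0..<k} \<and> p ` A2 \<inter> A1 = {}"
proof -
  have fA: "finite A1" "finite A2" using assms finite_subset by blast+
  define B where "B = {0..<k} - A1"
  have cB: "card B = k - card A1" unfolding B_def using assms(1) fA by (simp add: card_Diff_subset)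
  have fB: "finite B" unfolding B_def by simp
  have "card A2 \<le> card B" using cB assms(3) by simp
  then obtain g where g: "g ` A2 \<subseteq> B" "inj_on g A2"
    using card_le_inj[OF fA(2) fB] by blast
  have cg: "card (g ` A2) = card A2" using g(2) by (simp add: card_image)
  have gk: "g ` A2 \<subseteq> {0..<k}" using g(1) unfolding B_def by auto
  have "card ({0..<k} - A2) = card ({0..<k} - g ` A2)"
    using assms(2) gk cg fA by (simp add: card_Diff_subset)
  then obtain h where h: "bij_betw h ({0..<k} - A2) ({0..<k} - g ` A2)"
    using finite_same_card_bij by (metis finite_Diff finite_atLeastLessThan)
  define p where "p x = (if x \<in> A2 then g x else h x)" for x
  have "inj_on p {0..<k}"
  proof (rule inj_onI)
    fix x y assume xy: "x \<in> {0..<k}" "y \<in> {0..<k}" "p x = p y"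
    show "x = y"
    proof (cases "x \<in> A2"; cases "y \<in> A2")
      assume "x \<in> A2" "y \<in> A2" then show ?thesis using xy g(2) unfolding p_def inj_on_def by auto
    next
      assume a: "x \<in> A2" "y \<notin> A2"
      then have "y \<in> {0..<k} - A2" using xy by auto
      then have "h y \<in> {0..<k} - g ` A2" using h unfolding bij_betw_def by blast
      then have "h y \<notin> g ` A2" by blast
      then show ?thesis using a xy unfolding p_def by (metis imageI)
    next
      assume a: "x \<notin> A2" "y \<in> A2"
      then have "x \<in> {0..<k} - A2" using xy by auto
      then have "h x \<in> {0..<k} - g ` A2" using h unfolding bij_betw_def by blast
      then have "h x \<notin> g ` A2" by blast
      then show ?thesis using a xy unfolding p_def by (metis imageI)
    next
      assume "x \<notin> A2" "y \<notin> A2" then show ?thesis using xy h unfolding p_def bij_betw_def inj_on_def by auto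
    qed
  qed
  moreover have "p ` {0..<k} \<subseteq> {0..<k}"
  proof
    fix y assume "y \<in> p ` {0..<k}"
    then obtain x where x: "x \<in> {0..<k}" "y = p x" by blast
    show "y \<in> {0..<k}"
    proof (cases "x \<in> A2")
      case True then show ?thesis using x gk unfolding p_def by auto
    next
      case False
      then have "x \<in> {0..<k} - A2" using x by auto
      then have "h x \<in> {0..<k} - g ` A2" using h unfolding bij_betw_def by blast
      then show ?thesis using x False unfolding p_def by auto
    qed
  qed
  moreover have "p ` A2 \<inter> A1 = {}" using g(1) unfolding p_def B_def by auto
  ultimately show ?thesis by blast
qed

lemma sep:
  assumes fin: "finite F" and crit: "\<forall>F'. F' \<subset> F \<longrightarrow> colourable F' k"
    and un: "F1 \<union> F2 = F" and dis: "F1 \<inter> F2 = {}" and n1: "F1 \<noteq> F" and n2: "F2 \<noteq> F"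
    and sh: "\<Union>F1 \<inter> \<Union>F2 \<subseteq> {u}" and du: "card {f\<in>F. u \<in> f} \<le> k"
  shows "colourable F k"
proof -
  have "F1 \<subset> F" "F2 \<subset> F" using un n1 n2 by auto
  then have "colourable F1 k" "colourable F2 k" using crit by auto
  then obtain c1 c2 where c1: "proper_edge_colouring F1 k c1" and c2: "proper_edge_colouring F2 k c2"
    unfolding colourable_def by blast
  define A1 where "A1 = c1 ` {f\<in>F1. u \<in> f}"
  define A2 where "A2 = c2 ` {f\<in>F2. u \<in> f}"
  have fF: "finite F1" "finite F2" using fin un by auto
  have "card A1 + card A2 \<le> card {f\<in>F1. u \<in> f} + card {f\<in>F2. u \<in> f}"
    unfolding A1_def A2_def using fF by (intro add_mono card_image_le) auto
  also have "\<dots> = card ({f\<in>F1. u \<in> f} \<union> {f\<in>F2. u \<in> f})"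
    using fF dis by (intro card_Un_disjoint[symmetric]) auto
  also have "{f\<in>F1. u \<in> f} \<union> {f\<in>F2. u \<in> f} = {f\<in>F. u \<in> f}" using un by auto
  finally have cA: "card A1 + card A2 \<le> k" using du by simp
  have "A1 \<subseteq> {0..<k}" "A2 \<subseteq> {0..<k}"
    using c1 c2 unfolding A1_def A2_def proper_edge_colouring_def by auto
  then obtain p where p: "inj_on p {0..<k}" "p ` {0..<k} \<subseteq> {0..<k}" "p ` A2 \<inter> A1 = {}"
    using perm_exists[OF _ _ cA] by blast
  define c where "c e = (if e \<in> F1 then c1 e else p (c2 e))" for e
  have r1: "c1 e < k" if "e \<in> F1" for e using c1 that unfolding proper_edge_colouring_def by auto
  have r2: "c2 e < k" if "e \<in> F2" for e using c2 that unfolding proper_edge_colouring_def by auto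
  have "proper_edge_colouring F k c"
    unfolding proper_edge_colouring_def
  proof (intro conjI ballI impI)
    fix e assume "e \<in> F"
    show "c e < k"
    proof (cases "e \<in> F1")
      case True then show ?thesis using r1 unfolding c_def by simp
    next
      case False
      then have "e \<in> F2" using un \<open>e \<in> F\<close> by blast
      then have "c2 e \<in> {0..<k}" using r2 by simp
      then have "p (c2 e) \<in> {0..<k}" using p(2) by blast
      then show ?thesis using False unfolding c_def by simp
    qed
  next
    fix e f assume ef: "e \<in> F" "f \<in> F" "e \<noteq> f \<and> e \<inter> f \<noteq> {}"
    obtain z where z: "z \<in> e" "z \<in> f" using ef(3) by blast
    have mixed: "c1 a \<noteq> p (c2 b)" if "a \<in> F1" "b \<in> F2" "z \<in> a" "z \<in> b" for a b
    proof -
      have "z = u" using sh that by blast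
      then have "c1 a \<in> A1" "c2 b \<in> A2" using that unfolding A1_def A2_def by auto
      then show ?thesis using p(3) by blast
    qed
    show "c e \<noteq> c f"
    proof (cases "e \<in> F1"; cases "f \<in> F1")
      assume a: "e \<in> F1" "f \<in> F1"
      then have "c1 e \<noteq> c1 f" using proper_diff[OF c1 a] ef z by blast
      then show ?thesis using a unfolding c_def by simp
    next
      assume a: "e \<in> F1" "f \<notin> F1"
      then have "f \<in> F2" using un ef by auto
      then show ?thesis using mixed[OF a(1) _ z] a unfolding c_def by simp
    next
      assume a: "e \<notin> F1" "f \<in> F1"
      then have "e \<in> F2" using un ef by auto
      then have "c1 f \<noteq> p (c2 e)" using mixed[OF a(2) _ z(2,1)] by blast
      then show ?thesis using a unfolding c_def by simp
    next
      assume a: "e \<notin> F1" "f \<notin> F1"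
      then have e2: "e \<in> F2" "f \<in> F2" using un ef by auto
      then have "c2 e \<noteq> c2 f" using proper_diff[OF c2 e2] ef z by blast
      moreover have "c2 e \<in> {0..<k}" "c2 f \<in> {0..<k}" using r2 e2 by auto
      ultimately have "p (c2 e) \<noteq> p (c2 f)" using p(1) unfolding inj_on_def by blast
      then show ?thesis using a unfolding c_def by simp
    qed
  qed
  then show ?thesis unfolding colourable_def by blast
qed




lemma reach_T:
  assumes "(\<lambda>x y. {x, y} \<in> T)\<^sup>*\<^sup>* x z"
  shows "z = x \<or> z \<in> \<Union>T"
  using assms
proof (cases rule: rtranclp.cases)
  case (rtrancl_into_rtrancl b)
  then show ?thesis by blast
qed simp

lemma T_connected:
  assumes fin: "finite F" and two: "\<forall>f\<in>F. card f = 2" and crit: "\<forall>F'. F' \<subset> F \<longrightarrow> colourable F' k"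
    and nc: "\<not> colourable F k" and du: "card {f\<in>F. u \<in> f} \<le> k"
  shows "connected_edge_set {f\<in>F. u \<notin> f}"
proof (rule ccontr)
  define T where "T = {f\<in>F. u \<notin> f}"
  define RT where "RT = (\<lambda>x y. {x, y} \<in> T)"
  assume "\<not> connected_edge_set {f\<in>F. u \<notin> f}"
  then obtain x y where xy: "x \<in> \<Union>T" "y \<in> \<Union>T" "\<not> RT\<^sup>*\<^sup>* x y"
    unfolding connected_edge_set_def T_def RT_def by blast
  define C where "C = {z. RT\<^sup>*\<^sup>* x z}"
  have uT: "u \<notin> \<Union>T" unfolding T_def by blast
  have uC: "u \<notin> C"
  proof
    assume "u \<in> C"
    then have "RT\<^sup>*\<^sup>* x u" unfolding C_def by simp
    then have "u = x \<or> u \<in> \<Union>T" unfolding RT_def by (rule reach_T)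
    then show False using uT xy(1) by blast
  qed
  have xC: "x \<in> C" unfolding C_def by simp
  have yC: "y \<notin> C" unfolding C_def using xy(3) by simp
  have stepC: "b \<in> C" if "a \<in> C" "{a, b} \<in> T" for a b
  proof -
    have "RT a b" unfolding RT_def using that(2) .
    then have "RT\<^sup>*\<^sup>* x b" using that(1) unfolding C_def by (simp add: rtranclp.rtrancl_into_rtrancl)
    then show ?thesis unfolding C_def by simp
  qed
  define F1 where "F1 = {f\<in>F. f \<inter> C \<noteq> {}}"
  define F2 where "F2 = F - F1"
  have un: "F1 \<union> F2 = F" unfolding F1_def F2_def by blast
  have dis: "F1 \<inter> F2 = {}" unfolding F2_def by blast
  have sh: "\<Union>F1 \<inter> \<Union>F2 \<subseteq> {u}"
  proof
    fix z assume "z \<in> \<Union>F1 \<inter> \<Union>F2"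
    then obtain f1 f2 where f: "f1 \<in> F1" "f2 \<in> F2" "z \<in> f1" "z \<in> f2" by blast
    show "z \<in> {u}"
    proof (rule ccontr)
      assume zu: "z \<notin> {u}"
      have "f2 \<inter> C = {}" using f(2) unfolding F2_def F1_def by blast
      then have zC: "z \<notin> C" using f(4) by blast
      obtain a where a: "a \<in> f1" "a \<in> C" using f(1) unfolding F1_def by blast
      have az: "a \<noteq> z" using a zC by blast
      have f1F: "f1 \<in> F" using f(1) unfolding F1_def by blast
      have "f1 = {a, z}" using card2_eq[of f1 a z] two f1F a(1) f(3) az by blast
      moreover have "u \<notin> f1" using uC a(2) zu calculation by blast
      ultimately have "{a, z} \<in> T" using f1F unfolding T_def by blast
      then have "z \<in> C" using stepC a(2) by blast
      then show False using zC by blast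
    qed
  qed
  obtain gy where gy: "gy \<in> T" "y \<in> gy" using xy(2) by blast
  have "gy \<notin> F1"
  proof
    assume "gy \<in> F1"
    then obtain a where a: "a \<in> gy" "a \<in> C" unfolding F1_def by blast
    have ay: "a \<noteq> y" using a yC by blast
    have gF: "gy \<in> F" using gy(1) unfolding T_def by blast
    have "gy = {a, y}" using card2_eq[of gy a y] two gF a(1) gy(2) ay by blast
    then have "{a, y} \<in> T" using gy(1) by simp
    then have "y \<in> C" using stepC a(2) by blast
    then show False using yC by blast
  qed
  then have n1: "F1 \<noteq> F" using gy(1) unfolding T_def by blast
  obtain gx where gx: "gx \<in> T" "x \<in> gx" using xy(1) by blast
  have "gx \<in> F1" using gx xC unfolding F1_def T_def by blast
  then have n2: "F2 \<noteq> F" unfolding F2_def using gx(1) unfolding T_def by blast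
  have "colourable F k" by (rule sep[OF fin crit un dis n1 n2 sh du])
  then show False using nc by blast
qed

lemma deg_ge2:
  assumes fin: "finite F" and two: "\<forall>f\<in>F. card f = 2" and crit: "\<forall>F'. F' \<subset> F \<longrightarrow> colourable F' k"
    and nc: "\<not> colourable F k" and du: "card {f\<in>F. u \<in> f} \<le> k" and k1: "1 \<le> k"
    and f: "f \<in> F" "f = {u, w}" "w \<noteq> u"
  shows "\<exists>g\<in>F. w \<in> g \<and> g \<noteq> f"
proof (rule ccontr)
  assume h: "\<not> ?thesis"
  show False
  proof (cases "F = {f}")
    case True
    have "proper_edge_colouring F k (\<lambda>_. 0)" unfolding proper_edge_colouring_def using True k1 by auto
    then show False using nc unfolding colourable_def by blast
  next
    case False
    have un: "{f} \<union> (F - {f}) = F" using f(1) by blast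
    have dis: "{f} \<inter> (F - {f}) = {}" by blast
    have n1: "{f} \<noteq> F" using False by simp
    have n2: "F - {f} \<noteq> F" using f(1) by blast
    have sh: "\<Union>{f} \<inter> \<Union>(F - {f}) \<subseteq> {u}"
    proof
      fix z assume z: "z \<in> \<Union>{f} \<inter> \<Union>(F - {f})"
      then have "z = u \<or> z = w" using f(2) by blast
      moreover have "z \<noteq> w"
      proof
        assume "z = w"
        then obtain g where "g \<in> F - {f}" "w \<in> g" using z by blast
        then show False using h by blast
      qed
      ultimately show "z \<in> {u}" by blast
    qed
    have "colourable F k" by (rule sep[OF fin crit un dis n1 n2 sh du])
    then show False using nc by blast
  qed
qed

lemma crit_bramble:
  assumes fin: "finite F" and two: "\<forall>f\<in>F. card f = 2" and crit: "\<forall>F'. F' \<subset> F \<longrightarrow> colourable F' k"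
    and nc: "\<not> colourable F k" and degle: "\<forall>x. card {f\<in>F. x \<in> f} \<le> k"
  shows "\<exists>S. bramble F (Suc k) S"
proof -
  have Fne: "F \<noteq> {}"
  proof
    assume "F = {}"
    then have "proper_edge_colouring F k (\<lambda>_. 0)" unfolding proper_edge_colouring_def by simp
    then show False using nc unfolding colourable_def by blast
  qed
  then obtain e where e: "e \<in> F" by blast
  obtain a b where ab: "a \<noteq> b" "e = {a, b}" using two e by (meson card_2_iff)
  have "\<exists>u. card {f\<in>F. u \<in> f} = k"
  proof (rule ccontr)
    assume "\<not> ?thesis"
    then have lt: "\<forall>x. card {f\<in>F. x \<in> f} < k" using degle le_neq_implies_less by blast
    have "F - {e} \<subset> F" using e by blast
    then have "colourable (F - {e}) k" using crit by blast
    then obtain c where c: "proper_edge_colouring (F - {{a, b}}) k c" unfolding colourable_def ab(2) by blast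
    have "{a, b} \<in> F" using e ab(2) by simp
    from vizing[OF two fin this lt c] show False using nc unfolding colourable_def by blast
  qed
  then obtain u where du: "card {f\<in>F. u \<in> f} = k" by blast
  have "e \<in> {f\<in>F. a \<in> f}" using e ab by simp
  then have "1 \<le> card {f\<in>F. a \<in> f}" using fin card_0_eq[of "{f\<in>F. a \<in> f}"] by fastforce
  then have k1: "1 \<le> k" using degle[rule_format, of a] by linarith
  define D where "D = {f\<in>F. u \<in> f}"
  define T where "T = {f\<in>F. u \<notin> f}"
  have finD: "finite D" unfolding D_def using fin by simp
  obtain h where h: "bij_betw h {0..<k} D" using ex_bij_betw_nat_finite[OF finD] du unfolding D_def by auto
  have hD: "h i \<in> D" if "i < k" for i using h that unfolding bij_betw_def by auto
  have hinj: "h i \<noteq> h j" if "i < k" "j < k" "i \<noteq> j" for i j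
    using h that unfolding bij_betw_def inj_on_def by auto
  have dule: "card {f\<in>F. u \<in> f} \<le> k" using du by simp
  have Tc: "connected_edge_set T" unfolding T_def by (rule T_connected[OF fin two crit nc dule])
  have nb: "w \<in> \<Union>T \<and> w \<noteq> u" if A: "f \<in> D" "w \<in> f" "w \<noteq> u" for f w
  proof -
    have fF: "f \<in> F" "u \<in> f" using A(1) unfolding D_def by auto
    have c2: "card f = 2" using two fF(1) by blast
    have fe: "f = {u, w}" using card2_eq[OF c2 fF(2) A(2)] A(3) by simp
    obtain g where g: "g \<in> F" "w \<in> g" "g \<noteq> f" using deg_ge2[OF fin two crit nc dule k1 fF(1) fe A(3)] by blast
    have "u \<notin> g"
    proof
      assume "u \<in> g"
      then have "g = {u, w}" using card2_eq[of g u w] two g(1,2) A(3) by blast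
      then show False using g(3) fe by simp
    qed
    then have "g \<in> T" unfolding T_def using g(1) by blast
    then show ?thesis using g(2) A(3) by blast
  qed
  have other: "\<exists>w. w \<in> f \<and> w \<noteq> u" if "f \<in> D" for f
  proof -
    have fF: "f \<in> F" "u \<in> f" using that unfolding D_def by auto
    have c2: "card f = 2" using two fF(1) by blast
    obtain y where "y \<noteq> u" "f = {u, y}" using card2_other[OF c2 fF(2)] by blast
    then show ?thesis by blast
  qed
  have Tne: "T \<noteq> {}"
  proof -
    have "h 0 \<in> D" using hD k1 by simp
    then obtain w where "w \<in> h 0" "w \<noteq> u" using other by blast
    then have "w \<in> \<Union>T" using nb \<open>h 0 \<in> D\<close> by blast
    then show ?thesis by blast
  qed
  define S where "S i = (if i < k then {h i} else T)" for i
  have "bramble F (Suc k) S"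
    unfolding bramble_def
  proof (intro conjI allI impI)
    fix i assume i: "i < Suc k"
    show "S i \<subseteq> F"
    proof (cases "i < k")
      case True then show ?thesis using hD unfolding S_def D_def by auto
    next
      case False then show ?thesis unfolding S_def T_def by auto
    qed
    show "S i \<noteq> {}" using Tne unfolding S_def by simp
    show "connected_edge_set (S i)"
    proof (cases "i < k")
      case True
      have "h i \<in> F" using hD[OF True] unfolding D_def by simp
      then have "card (h i) = 2" using two by blast
      then show ?thesis using True conn_single unfolding S_def by simp
    next
      case False then show ?thesis using Tc unfolding S_def by simp
    qed
  next
    fix i j assume ij: "i < Suc k" "j < Suc k" "i \<noteq> j"
    have star_T: "{h l} \<inter> T = {} \<and> \<Union>{h l} \<inter> \<Union>T \<noteq> {}" if l: "l < k" for l
    proof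
      have "u \<in> h l" using hD[OF l] unfolding D_def by simp
      then show "{h l} \<inter> T = {}" unfolding T_def by blast
      obtain w where w: "w \<in> h l" "w \<noteq> u" using other hD[OF l] by blast
      then have "w \<in> \<Union>T" using nb hD[OF l] by blast
      then show "\<Union>{h l} \<inter> \<Union>T \<noteq> {}" using w by blast
    qed
    have both: "S i \<inter> S j = {} \<and> \<Union>(S i) \<inter> \<Union>(S j) \<noteq> {}"
    proof (cases "i < k \<and> j < k")
      case True
      have "u \<in> h i" "u \<in> h j" using hD True unfolding D_def by auto
      moreover have "h i \<noteq> h j" using hinj True ij(3) by blast
      ultimately show ?thesis using True unfolding S_def by auto
    next
      case False
      then have "(i < k \<and> j = k) \<or> (j < k \<and> i = k)" using ij by auto
      then show ?thesis
      proof
        assume a: "i < k \<and> j = k"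
        then show ?thesis using star_T[of i] unfolding S_def by simp
      next
        assume a: "j < k \<and> i = k"
        then show ?thesis using star_T[of j] unfolding S_def by auto
      qed
    qed
    then show "S i \<inter> S j = {}" by blast
    from both show "\<Union>(S i) \<inter> \<Union>(S j) \<noteq> {}" by blast
  qed
  then show ?thesis by blast
qed

lemma main:
  assumes "finite F"
  shows "(\<forall>f\<in>F. card f = 2) \<longrightarrow> \<not> colourable F k \<longrightarrow> (\<exists>S. bramble F (Suc k) S)"
  using assms
proof (induction F rule: finite_psubset_induct)
  case (psubset F)
  show ?case
  proof (intro impI)
    assume two: "\<forall>f\<in>F. card f = 2" and nc: "\<not> colourable F k"
    show "\<exists>S. bramble F (Suc k) S"
    proof (cases "\<exists>F'. F' \<subset> F \<and> \<not> colourable F' k")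
      case True
      then obtain F' where F': "F' \<subset> F" "\<not> colourable F' k" by blast
      have "\<forall>f\<in>F'. card f = 2" using two F'(1) by blast
      then obtain S where "bramble F' (Suc k) S" using psubset.IH[OF F'(1)] F'(2) by blast
      then have "bramble F (Suc k) S" using bramble_mono F'(1) by blast
      then show ?thesis by blast
    next
      case False
      then have crit: "\<forall>F'. F' \<subset> F \<longrightarrow> colourable F' k" by blast
      show ?thesis
      proof (cases "\<exists>x. Suc k \<le> card {f\<in>F. x \<in> f}")
        case True
        then obtain x where "Suc k \<le> card {f\<in>F. x \<in> f}" by blast
        then show ?thesis using star[OF psubset.hyps two] by blast
      next
        case False
        then have "\<forall>x. card {f\<in>F. x \<in> f} \<le> k" by (simp add: not_less_eq_eq)
        then show ?thesis using crit_bramble[OF psubset.hyps two crit nc] by blast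
      qed
    qed
  qed
qed

theorem lemma2p4:
  fixes V :: "'a set" and E :: "'a set set" and t :: nat
  assumes "simple_graph V E"
    and "chromatic_index E \<ge> t"
  shows "\<exists>S :: nat \<Rightarrow> 'a set set.
           (\<forall>i<t. S i \<subseteq> E \<and> S i \<noteq> {} \<and> connected_edge_set (S i)) \<and>
           (\<forall>i<t. \<forall>j<t. i \<noteq> j \<longrightarrow> S i \<inter> S j = {} \<and> \<Union>(S i) \<inter> \<Union>(S j) \<noteq> {})"
proof (cases t)
  case 0
  then show ?thesis by simp
next
  case (Suc k)
  have finV: "finite V" and sub: "\<forall>e\<in>E. e \<subseteq> V \<and> card e = 2" using assms(1) unfolding simple_graph_def by auto
  have "E \<subseteq> Pow V" using sub by blast
  moreover have "finite (Pow V)" using finV by simp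
  ultimately have finE: "finite E" by (rule finite_subset)
  have two: "\<forall>f\<in>E. card f = 2" using sub by blast
  have nc: "\<not> colourable E k"
  proof
    assume "colourable E k"
    then have "\<exists>c. proper_edge_colouring E k c" unfolding colourable_def .
    then have "chromatic_index E \<le> k" unfolding chromatic_index_def by (rule Least_le)
    then show False using assms(2) Suc by simp
  qed
  have "\<exists>S. bramble E (Suc k) S" using main[OF finE] two nc by simp
  then obtain S where "bramble E (Suc k) S" by (elim exE)
  note B' = this[unfolded bramble_def]
  show ?thesis unfolding Suc by (rule exI[of _ S], rule B')
qed


end
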